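(* Let $\approx$ be an equinumerosity on $\mathbb{W}$ and let $A,B\in\mathbb W$ with $A\approx B$. Then for every proper superset $A'\in\mathbb W$ of $A$ there exists a proper superset $B'\in\mathbb W$ of $B$ such that $A'\approx B'$.
   Context: Let $\mathbb N=\{0,1,2,\dots\}$. Let $\mathbb{W}$ be the family of finitary point sets: sets $A\subseteq\bigcup_{k\ge1}\mathbb N^k$ of finite tuples of natural numbers (tuples of different lengths allowed) such that for every $n\in\mathbb N$ there is $h$ with $A\cap\{0,\dots,n\}^k=\emptyset$ for all $k>h$. Cartesian products are identified with concatenations: $A\times B=\{(a_1,\dots,a_k,b_1,\dots,b_h):(a_1,\dots,a_k)\in A,\ (b_1,\dots,b_h)\in B\}$; $\{n\}$ denotes the set whose only element is the 1-tuple $(n)$. $A,B\in\mathbb W$ are multipliable if distinct pairs $(a,b)\in A\times B$ have distinct concatenations. Given an equivalence relation $\approx$ on $\mathbb W$, write $A\succ B$, equivalently $B\prec A$, if there exist $A',B'\in\mathbb W$ with $B'\subsetneq A'$, $A\approx A'$ and $B\approx B'$. An equinumerosity is an equivalence relation $\approx$ on $\mathbb W$ such that for all $A,B\in\mathbb W$: (AP) $A\approx B$ iff $A\setminus B\approx B\setminus A$; (ZP) exactly one of $A\approx B$, $A\succ B$, $A\prec B$ holds; (TP) if $T$ is injective on $A$ and $T(a)$ is a permutation of the coordinates of $a$ for every $a\in A$, then $A\approx T[A]$; (UP) $A\times\{n\}\approx A$ for all $n\in\mathbb N$; (PP) if $A,B$ are multipliable, $A',B'$ are multipliable, $A\approx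 A'$ and $B\approx B'$, then $A\times B\approx A'\times B'$. *)

theory Defs
  imports Main "HOL-Library.Multiset"
begin

text \<open>Finite tuples of naturals are represented as lists of naturals; a point set
  consists of nonempty lists (tuples of length k \<ge> 1).\<close>

definition finitary :: "nat list set \<Rightarrow> bool" where
  "finitary A \<longleftrightarrow> (\<forall>a\<in>A. a \<noteq> []) \<and>
     (\<forall>n::nat. \<exists>h::nat. \<forall>k>h. {a \<in> A. length a = k \<and> set a \<subseteq> {0..n}} = {})"

definition WW :: "nat list set set" where
  "WW = {A. finitary A}"

definition ptimes :: "nat list set \<Rightarrow> nat list set \<Rightarrow> nat list set" where
  "ptimes A B = {a @ b | a b. a \<in> A \<and> b \<in> B}"

definition psing :: "nat \<Rightarrow> nat list set" where
  "psing n = {[n]}"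

definition multipliable :: "nat list set \<Rightarrow> nat list set \<Rightarrow> bool" where
  "multipliable A B \<longleftrightarrow>
     (\<forall>a1\<in>A. \<forall>a2\<in>A. \<forall>b1\<in>B. \<forall>b2\<in>B. a1 @ b1 = a2 @ b2 \<longrightarrow> a1 = a2 \<and> b1 = b2)"

definition bigger :: "(nat list set \<times> nat list set) set \<Rightarrow> nat list set \<Rightarrow> nat list set \<Rightarrow> bool" where
  "bigger E A B \<longleftrightarrow> (\<exists>A'\<in>WW. \<exists>B'\<in>WW. B' \<subset> A' \<and> (A, A') \<in> E \<and> (B, B') \<in> E)"

definition equinumerosity :: "(nat list set \<times> nat list set) set \<Rightarrow> bool" where
  "equinumerosity E \<longleftrightarrow> equiv WW E \<and>
    (\<forall>A\<in>WW. \<forall>B\<in>WW. ((A, B) \<in> E \<longleftrightarrow> (A - B, B - A) \<in> E)) \<and>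
    (\<forall>A\<in>WW. \<forall>B\<in>WW.
       ((A, B) \<in> E \<and> \<not> bigger E A B \<and> \<not> bigger E B A) \<or>
       ((A, B) \<notin> E \<and> bigger E A B \<and> \<not> bigger E B A) \<or>
       ((A, B) \<notin> E \<and> \<not> bigger E A B \<and> bigger E B A)) \<and>
    (\<forall>A\<in>WW. \<forall>T. inj_on T A \<and> (\<forall>a\<in>A. mset (T a) = mset a) \<longrightarrow> (A, T ` A) \<in> E) \<and>
    (\<forall>A\<in>WW. \<forall>n. (ptimes A (psing n), A) \<in> E) \<and>
    (\<forall>A\<in>WW. \<forall>B\<in>WW. \<forall>A'\<in>WW. \<forall>B'\<in>WW.
       multipliable A B \<and> multipliable A' B' \<and> (A, A') \<in> E \<and> (B, B') \<in> E
       \<longrightarrow> (ptimes A B, ptimes A' B') \<in> E)"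

end

theory Submission
  imports Defs
begin

definition Lf :: "nat list set \<Rightarrow> nat \<Rightarrow> nat" where
  "Lf F m = (SOME h. \<forall>k>h. {a \<in> F. length a = k \<and> set a \<subseteq> {0..m}} = {})"

lemma Lf_spec:
  assumes "finitary F" "k > Lf F m" "a \<in> F" "set a \<subseteq> {0..m}"
  shows "length a \<noteq> k"
proof -
  have "\<exists>h. \<forall>k>h. {a \<in> F. length a = k \<and> set a \<subseteq> {0..m}} = {}"
    using assms(1) unfolding finitary_def by blast
  then have "\<forall>k>Lf F m. {a \<in> F. length a = k \<and> set a \<subseteq> {0..m}} = {}"
    unfolding Lf_def by (rule someI_ex)
  then show ?thesis using assms(2-4) by blast
qed

lemma finitary_Un: "finitary A \<Longrightarrow> finitary B \<Longrightarrow> finitary (A \<union> B)"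
  unfolding finitary_def
proof (intro conjI allI)
  fix n
  assume a: "(\<forall>a\<in>A. a \<noteq> []) \<and> (\<forall>n. \<exists>h. \<forall>k>h. {a \<in> A. length a = k \<and> set a \<subseteq> {0..n}} = {})"
    and b: "(\<forall>a\<in>B. a \<noteq> []) \<and> (\<forall>n. \<exists>h. \<forall>k>h. {a \<in> B. length a = k \<and> set a \<subseteq> {0..n}} = {})"
  obtain h1 where h1: "\<forall>k>h1. {a \<in> A. length a = k \<and> set a \<subseteq> {0..n}} = {}" using a by blast
  obtain h2 where h2: "\<forall>k>h2. {a \<in> B. length a = k \<and> set a \<subseteq> {0..n}} = {}" using b by blast
  show "\<exists>h. \<forall>k>h. {a \<in> A \<union> B. length a = k \<and> set a \<subseteq> {0..n}} = {}"
    by (rule exI[of _ "max h1 h2"]) (use h1 h2 in auto)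
next
  show "(\<forall>a\<in>A. a \<noteq> []) \<and> (\<forall>n. \<exists>h. \<forall>k>h. {a \<in> A. length a = k \<and> set a \<subseteq> {0..n}} = {}) \<Longrightarrow>
    (\<forall>a\<in>B. a \<noteq> []) \<and> (\<forall>n. \<exists>h. \<forall>k>h. {a \<in> B. length a = k \<and> set a \<subseteq> {0..n}} = {}) \<Longrightarrow>
    \<forall>a\<in>A \<union> B. a \<noteq> []" by blast
qed

lemma finitary_subset:
  assumes "finitary A" "B \<subseteq> A" shows "finitary B"
  unfolding finitary_def
proof (intro conjI allI)
  show "\<forall>a\<in>B. a \<noteq> []" using assms unfolding finitary_def by blast
next
  fix n
  obtain h where h: "\<forall>k>h. {a \<in> A. length a = k \<and> set a \<subseteq> {0..n}} = {}"
    using assms(1) unfolding finitary_def by blast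
  show "\<exists>h. \<forall>k>h. {a \<in> B. length a = k \<and> set a \<subseteq> {0..n}} = {}"
  proof (rule exI[of _ h], intro allI impI)
    fix k assume "k > h"
    then have "{a \<in> A. length a = k \<and> set a \<subseteq> {0..n}} = {}" using h by blast
    then show "{a \<in> B. length a = k \<and> set a \<subseteq> {0..n}} = {}" using assms(2) by blast
  qed
qed

lemma eq_equiv: "equinumerosity E \<Longrightarrow> equiv WW E"
  unfolding equinumerosity_def by (elim conjE)
lemma eq_AP: "equinumerosity E \<Longrightarrow> \<forall>A\<in>WW. \<forall>B\<in>WW. ((A, B) \<in> E \<longleftrightarrow> (A - B, B - A) \<in> E)"
  unfolding equinumerosity_def by (elim conjE)
lemma eq_ZP: "equinumerosity E \<Longrightarrow> (\<forall>A\<in>WW. \<forall>B\<in>WW.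
       ((A, B) \<in> E \<and> \<not> bigger E A B \<and> \<not> bigger E B A) \<or>
       ((A, B) \<notin> E \<and> bigger E A B \<and> \<not> bigger E B A) \<or>
       ((A, B) \<notin> E \<and> \<not> bigger E A B \<and> bigger E B A))"
  unfolding equinumerosity_def by (elim conjE)
lemma eq_UP: "equinumerosity E \<Longrightarrow> (\<forall>A\<in>WW. \<forall>n. (ptimes A (psing n), A) \<in> E)"
  unfolding equinumerosity_def by (elim conjE)
lemma E_WW: "equinumerosity E \<Longrightarrow> (X, Y) \<in> E \<Longrightarrow> X \<in> WW \<and> Y \<in> WW"
  using eq_equiv[of E] unfolding equiv_def refl_on_def by blast

lemma E_empty:
  assumes E: "equinumerosity E" and XE: "(X, {}) \<in> E"
  shows "X = {}"
proof (rule ccontr)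
  assume ne: "X \<noteq> {}"
  have W: "X \<in> WW" "{} \<in> WW" using E_WW[OF E XE] by auto
  have eq: "equiv WW E" using eq_equiv[OF E] .
  have r1: "(X, X) \<in> E" "({}, {}) \<in> E" using eq W unfolding equiv_def refl_on_def by auto
  have "bigger E X {}" unfolding bigger_def using W r1 ne by blast
  moreover have "((X, {}) \<in> E \<and> \<not> bigger E X {} \<and> \<not> bigger E {} X) \<or>
       ((X, {}) \<notin> E \<and> bigger E X {} \<and> \<not> bigger E {} X) \<or>
       ((X, {}) \<notin> E \<and> \<not> bigger E X {} \<and> bigger E {} X)"
    using eq_ZP[OF E] W by blast
  ultimately show False using XE by blast
qed

lemma fresh_copy:
  assumes E: "equinumerosity E" and C: "C \<in> WW" and F: "F \<in> WW"
  shows "\<exists>C'. (C', C) \<in> E \<and> C' \<inter> F = {}"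
proof -
  have eq: "equiv WW E" using eq_equiv[OF E] .
  have UP: "\<And>A n. A \<in> WW \<Longrightarrow> (ptimes A (psing n), A) \<in> E"
    using eq_UP[OF E] by blast
  have AP: "\<And>A B. A \<in> WW \<Longrightarrow> B \<in> WW \<Longrightarrow> ((A, B) \<in> E \<longleftrightarrow> (A - B, B - A) \<in> E)"
    using eq_AP[OF E] by blast
  have finF: "finitary F" using F unfolding WW_def by simp
  have finC: "finitary C" using C unfolding WW_def by simp
  define D where "D = ptimes C (psing 1)"
  have Dc: "D = (\<lambda>c. c @ [1]) ` C" unfolding D_def ptimes_def psing_def by auto
  have DC: "(D, C) \<in> E" unfolding D_def using UP[OF C] .
  define L where "L d = Lf F (Max (set d))" for d
  define M where "M = {d @ replicate j 0 | d j. d \<in> D \<and> j \<le> L d}"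
  have finM: "finitary M" unfolding finitary_def
  proof (intro conjI allI ballI)
    fix a assume "a \<in> M" then show "a \<noteq> []" unfolding M_def Dc by auto
  next
    fix n
    obtain hC where hC: "\<forall>k>hC. {a \<in> C. length a = k \<and> set a \<subseteq> {0..n}} = {}"
      using finC unfolding finitary_def by blast
    define Q where "Q = Max (Lf F ` {0..n})"
    show "\<exists>h. \<forall>k>h. {a \<in> M. length a = k \<and> set a \<subseteq> {0..n}} = {}"
    proof (rule exI[of _ "hC + 1 + Q"], intro allI impI)
      fix k assume k: "hC + 1 + Q < k"
      show "{a \<in> M. length a = k \<and> set a \<subseteq> {0..n}} = {}"
      proof (rule ccontr)
        assume "{a \<in> M. length a = k \<and> set a \<subseteq> {0..n}} \<noteq> {}"
        then obtain c j where cC: "c \<in> C" and j: "j \<le> L (c @ [1])"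
          and len: "length (c @ [1] @ replicate j 0) = k"
          and st: "set (c @ [1] @ replicate j 0) \<subseteq> {0..n}"
          unfolding M_def Dc by auto
        have sc: "set c \<subseteq> {0..n}" using st by auto
        have lc: "length c \<le> hC"
        proof (rule ccontr)
          assume "\<not> length c \<le> hC"
          then have "hC < length c" by simp
          then have "{a \<in> C. length a = length c \<and> set a \<subseteq> {0..n}} = {}" using hC by blast
          then show False using cC sc by auto
        qed
        have mx: "Max (set (c @ [1])) \<le> n" using st by auto
        have "L (c @ [1]) \<le> Q" unfolding L_def Q_def
          by (rule Max_ge) (use mx in auto)
        then show False using len lc j k by simp
      qed
    qed
  qed
  then have MW: "M \<in> WW" unfolding WW_def by simp
  define M0 where "M0 = ptimes M (psing 0)"
  have M0M: "(M0, M) \<in> E" unfolding M0_def using UP[OF MW] .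
  have M0W: "M0 \<in> WW" using E_WW[OF E M0M] by blast
  have ap: "(M0 - M, M - M0) \<in> E" using AP[OF M0W MW] M0M by blast
  have M0c: "M0 = {d @ replicate j 0 @ [0] | d j. d \<in> D \<and> j \<le> L d}"
    unfolding M0_def M_def ptimes_def psing_def by (auto; blast)
  have diff: "M - M0 = D"
  proof
    show "M - M0 \<subseteq> D"
    proof
      fix x assume x: "x \<in> M - M0"
      then obtain d j where d: "d \<in> D" "j \<le> L d" "x = d @ replicate j 0" unfolding M_def by auto
      show "x \<in> D"
      proof (cases j)
        case 0 then show ?thesis using d by simp
      next
        case (Suc i)
        have "x = d @ replicate i 0 @ [0]" using d Suc by (simp add: replicate_append_same)
        moreover have "i \<le> L d" using d Suc by simp
        ultimately have "x \<in> M0" unfolding M0c using d by blast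
        then show ?thesis using x by simp
      qed
    qed
  next
    show "D \<subseteq> M - M0"
    proof
      fix d assume d: "d \<in> D"
      have "d = d @ replicate 0 0" by simp
      then have "d \<in> M" unfolding M_def using d by blast
      moreover have "d \<notin> M0"
      proof
        assume "d \<in> M0"
        then have "last d = 0" unfolding M0c by auto
        moreover have "last d = 1" using d unfolding Dc by auto
        ultimately show False by simp
      qed
      ultimately show "d \<in> M - M0" by simp
    qed
  qed
  have CE: "(M0 - M, C) \<in> E" using ap DC eq diff unfolding equiv_def trans_def by metis
  have disj: "(M0 - M) \<inter> F = {}"
  proof (rule ccontr)
    assume "(M0 - M) \<inter> F \<noteq> {}"
    then obtain x where xM0: "x \<in> M0" and xM: "x \<notin> M" and xF: "x \<in> F" by blast
    then obtain d j where d: "d \<in> D" "j \<le> L d" "x = d @ replicate j 0 @ [0]" unfolding M0c by auto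
    have jL: "j = L d"
    proof (rule ccontr)
      assume "j \<noteq> L d"
      then have "Suc j \<le> L d" using d by simp
      moreover have "x = d @ replicate (Suc j) 0" using d by (simp add: replicate_append_same)
      ultimately have "x \<in> M" unfolding M_def using d by blast
      then show False using xM by simp
    qed
    have dne: "d \<noteq> []" using d unfolding Dc by auto
    have "set x \<subseteq> {0..Max (set d)}" using d dne by auto
    moreover have "length x > Lf F (Max (set d))" using d jL unfolding L_def by simp
    ultimately show False using Lf_spec[OF finF _ xF] by blast
  qed
  show ?thesis using CE disj by blast
qed

theorem lemma1p5:
  assumes "equinumerosity E"
    and "A \<in> WW" and "B \<in> WW" and "(A, B) \<in> E"
    and "A' \<in> WW" and "A \<subset> A'"
  shows "\<exists>B'\<in>WW. B \<subset> B' \<and> (A', B') \<in> E"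
proof -
  note E = assms(1)
  have eq: "equiv WW E" using eq_equiv[OF E] .
  have AP: "\<And>A B. A \<in> WW \<Longrightarrow> B \<in> WW \<Longrightarrow> ((A, B) \<in> E \<longleftrightarrow> (A - B, B - A) \<in> E)"
    using eq_AP[OF E] by blast
  define C where "C = A' - A"
  have Cne: "C \<noteq> {}" using assms(6) unfolding C_def by blast
  have fA': "finitary A'" "finitary B" "finitary A" using assms unfolding WW_def by auto
  have CW: "C \<in> WW" using finitary_subset[OF fA'(1)] unfolding C_def WW_def by auto
  have FW: "A' \<union> B \<in> WW" using finitary_Un[OF fA'(1,2)] unfolding WW_def by simp
  obtain C' where C'C: "(C', C) \<in> E" and dj: "C' \<inter> (A' \<union> B) = {}"
    using fresh_copy[OF E CW FW] by blast
  have C'W: "C' \<in> WW" using E_WW[OF E C'C] by blast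
  have CC': "(C, C') \<in> E" using C'C eq unfolding equiv_def sym_def by blast
  have C'ne: "C' \<noteq> {}"
  proof
    assume "C' = {}" then have "C = {}" using E_empty[OF E] CC' by simp
    then show False using Cne by simp
  qed
  have fC': "finitary C'" using C'W unfolding WW_def by simp
  have W1: "A \<union> C' \<in> WW" using finitary_Un[OF fA'(3) fC'] unfolding WW_def by simp
  have W2: "B \<union> C' \<in> WW" using finitary_Un[OF fA'(2) fC'] unfolding WW_def by simp
  have d1: "A' - (A \<union> C') = C" "(A \<union> C') - A' = C'" using dj assms(6) unfolding C_def by auto
  have s1: "(A', A \<union> C') \<in> E" using AP[OF assms(5) W1] d1 CC' by simp
  have d2: "(A \<union> C') - (B \<union> C') = A - B" "(B \<union> C') - (A \<union> C') = B - A"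
    using dj assms(6) by auto
  have AB: "(A - B, B - A) \<in> E" using AP[OF assms(2,3)] assms(4) by blast
  have s2: "(A \<union> C', B \<union> C') \<in> E" using AP[OF W1 W2] d2 AB by simp
  have s: "(A', B \<union> C') \<in> E" using s1 s2 eq unfolding equiv_def trans_def by blast
  have "B \<subset> B \<union> C'" using C'ne dj by blast
  then show ?thesis using s W2 by blast
qed

end
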